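(* Let $K,L$ be compact Hausdorff spaces and suppose there are continuous maps $e\colon L\to K$ and $r\colon K\to L$ with $r\circ e=\mathrm{Id}_L$. If $C(K)$ has the ball fixed point property, then $C(L)$ has the ball fixed point property.
   Context: $C(K)$ is the real Banach space of continuous functions on compact $K$ with the sup norm. A real Banach space $X$ has the ball fixed point property (BFPP) if every nonexpansive map $T\colon B_X\to B_X$ (i.e. $\|Tx-Ty\|\le\|x-y\|$) has a fixed point, where $B_X$ is the closed unit ball. *)

theory Defs
  imports "HOL-Analysis.Analysis"
begin

text \<open>The real Banach space C(X) of continuous real functions on a compact space X,
  represented as functions that are continuous on topspace X and vanish outside it
  (so that equality of elements of C(X) is equality of HOL functions).\<close>
definition Cspace :: "'a topology \<Rightarrow> ('a \<Rightarrow> real) set" where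
  "Cspace X = {f. continuous_map X euclideanreal f \<and> (\<forall>x. x \<notin> topspace X \<longrightarrow> f x = 0)}"

definition supnorm :: "'a topology \<Rightarrow> ('a \<Rightarrow> real) \<Rightarrow> real" where
  "supnorm X f = Sup ({0} \<union> (\<lambda>x. \<bar>f x\<bar>) ` topspace X)"

definition Cball :: "'a topology \<Rightarrow> ('a \<Rightarrow> real) set" where
  "Cball X = {f \<in> Cspace X. supnorm X f \<le> 1}"

definition BFPP_C :: "'a topology \<Rightarrow> bool" where
  "BFPP_C X \<longleftrightarrow>
     (\<forall>T. (\<forall>f\<in>Cball X. T f \<in> Cball X) \<and>
          (\<forall>f\<in>Cball X. \<forall>g\<in>Cball X. supnorm X (T f - T g) \<le> supnorm X (f - g))
        \<longrightarrow> (\<exists>f\<in>Cball X. T f = f))"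

end

theory Submission
  imports Defs
begin

definition cmp :: "'a topology \<Rightarrow> ('a \<Rightarrow> 'b) \<Rightarrow> ('b \<Rightarrow> real) \<Rightarrow> ('a \<Rightarrow> real)" where
  "cmp X p g = (\<lambda>x. if x \<in> topspace X then g (p x) else 0)"

lemma Cspace_diff: "f \<in> Cspace X \<Longrightarrow> g \<in> Cspace X \<Longrightarrow> f - g \<in> Cspace X"
  unfolding Cspace_def fun_diff_def by (auto intro: continuous_map_diff)

lemma bdd_Cspace:
  assumes "f \<in> Cspace X" "compact_space X"
  shows "bdd_above ((\<lambda>x. \<bar>f x\<bar>) ` topspace X)"
proof -
  have c: "continuous_map X euclideanreal (\<lambda>x. \<bar>f x\<bar>)"
    using assms(1) unfolding Cspace_def by (auto intro: continuous_map_real_abs)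
  have "compactin euclideanreal ((\<lambda>x. \<bar>f x\<bar>) ` topspace X)"
    using image_compactin[OF _ c] assms(2) compact_space_def by blast
  then have "compact ((\<lambda>x. \<bar>f x\<bar>) ` topspace X)" by (simp add: compactin_euclidean_iff)
  then show ?thesis by (intro bounded_imp_bdd_above compact_imp_bounded)
qed

lemma cmp_Cspace:
  assumes "continuous_map X Y p" "g \<in> Cspace Y"
  shows "cmp X p g \<in> Cspace X"
proof -
  have "continuous_map X euclideanreal (g \<circ> p)"
    using assms unfolding Cspace_def by (auto intro: continuous_map_compose)
  then have "continuous_map X euclideanreal (cmp X p g)"
    by (rule continuous_map_eq) (simp add: cmp_def)
  then show ?thesis unfolding Cspace_def cmp_def by auto
qed

lemma cmp_norm:
  assumes "continuous_map X Y p" "g \<in> Cspace Y" "compact_space Y"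
  shows "supnorm X (cmp X p g) \<le> supnorm Y g"
  unfolding supnorm_def
proof (rule cSup_subset_mono)
  show "{0} \<union> (\<lambda>x. \<bar>cmp X p g x\<bar>) ` topspace X \<noteq> {}" by simp
  show "bdd_above ({0} \<union> (\<lambda>x. \<bar>g x\<bar>) ` topspace Y)"
    using bdd_Cspace[OF assms(2,3)] by simp
  show "{0} \<union> (\<lambda>x. \<bar>cmp X p g x\<bar>) ` topspace X \<subseteq> {0} \<union> (\<lambda>x. \<bar>g x\<bar>) ` topspace Y"
    using continuous_map_image_subset_topspace[OF assms(1)] by (auto simp: cmp_def)
qed

lemma cmp_diff: "cmp X p f - cmp X p g = cmp X p (f - g)"
  by (auto simp: cmp_def fun_eq_iff)

lemma cmp_Cball:
  assumes "continuous_map X Y p" "g \<in> Cball Y" "compact_space Y"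
  shows "cmp X p g \<in> Cball X"
  using assms cmp_Cspace cmp_norm unfolding Cball_def by fastforce

theorem mainTheorem12:
  fixes K :: "'a topology" and L :: "'b topology"
    and e :: "'b \<Rightarrow> 'a" and r :: "'a \<Rightarrow> 'b"
  assumes "compact_space K" "Hausdorff_space K"
    and "compact_space L" "Hausdorff_space L"
    and "continuous_map L K e" "continuous_map K L r"
    and "\<forall>x\<in>topspace L. r (e x) = x"
    and "BFPP_C K"
  shows "BFPP_C L"
  unfolding BFPP_C_def
proof (intro allI impI)
  fix T
  assume T: "(\<forall>f\<in>Cball L. T f \<in> Cball L) \<and>
          (\<forall>f\<in>Cball L. \<forall>g\<in>Cball L. supnorm L (T f - T g) \<le> supnorm L (f - g))"
  define S where "S = (\<lambda>f. cmp K r (T (cmp L e f)))"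
  have ER: "cmp L e (cmp K r g) = g" if "g \<in> Cspace L" for g
    using that assms(7) continuous_map_image_subset_topspace[OF assms(5)]
    by (auto simp: cmp_def fun_eq_iff Cspace_def)
  have S1: "\<forall>f\<in>Cball K. S f \<in> Cball K"
    unfolding S_def using T cmp_Cball[OF assms(5) _ assms(1)] cmp_Cball[OF assms(6) _ assms(3)] by blast
  have S2: "\<forall>f\<in>Cball K. \<forall>g\<in>Cball K. supnorm K (S f - S g) \<le> supnorm K (f - g)"
  proof (intro ballI)
    fix f g assume f: "f \<in> Cball K" and g: "g \<in> Cball K"
    have ef: "cmp L e f \<in> Cball L" and eg: "cmp L e g \<in> Cball L"
      using f g cmp_Cball assms by auto
    have "supnorm K (S f - S g) = supnorm K (cmp K r (T (cmp L e f) - T (cmp L e g)))"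
      by (simp add: S_def cmp_diff)
    also have "\<dots> \<le> supnorm L (T (cmp L e f) - T (cmp L e g))"
      using T ef eg assms by (intro cmp_norm Cspace_diff) (auto simp: Cball_def)
    also have "\<dots> \<le> supnorm L (cmp L e f - cmp L e g)" using T ef eg by blast
    also have "\<dots> = supnorm L (cmp L e (f - g))" by (simp add: cmp_diff)
    also have "\<dots> \<le> supnorm K (f - g)"
      using f g assms by (intro cmp_norm Cspace_diff) (auto simp: Cball_def)
    finally show "supnorm K (S f - S g) \<le> supnorm K (f - g)" .
  qed
  obtain f where f: "f \<in> Cball K" "S f = f"
    using assms(8) S1 S2 unfolding BFPP_C_def by blast
  have ef: "cmp L e f \<in> Cball L" using f cmp_Cball assms by auto
  have "T (cmp L e f) = cmp L e f"
  proof -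
    have "T (cmp L e f) \<in> Cspace L" using T ef by (auto simp: Cball_def)
    then have "T (cmp L e f) = cmp L e (S f)" by (simp add: S_def ER)
    then show ?thesis using f by simp
  qed
  then show "\<exists>f\<in>Cball L. T f = f" using ef by blast
qed

end
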